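(* Let $p\in(1,\frac32)$, $q\in[1,\infty)$, $s_p=2-\frac3p$, and let $\theta,s,\tilde p,\tilde q$ satisfy: $\theta\in(0,1)$, $s_p=(1-\theta)s$, $\frac1p=\frac\theta2+\frac{1-\theta}{\tilde p}$, $\tilde p\in(1,\frac32)$, $\tilde q\in[1,\infty]$ and $$\frac1{\tilde q}=\begin{cases}\frac1{1-\theta}\big(\frac1q-\frac\theta2\big), & q>p,\\[2pt] \frac1{\tilde p}, & q\le p.\end{cases}$$ Then there is an absolute constant $C$ such that for every divergence-free vector field $f\in F\dot B^{s_p}_{p,q}(\mathbb R^3)$ and every $j\in\mathbb Z$ there exist divergence-free vector fields $g_0\in F\dot B^{s}_{\tilde p,\tilde q}(\mathbb R^3)$ and $h_0\in L^2(\mathbb R^3)$ with $f=g_0+h_0$, $$\|g_0\|_{F\dot B^{s}_{\tilde p,\tilde q}}\le C2^{-j\theta}\|f\|_{F\dot B^{s_p}_{p,q}},\qquad \|h_0\|_{L^2}\le C2^{j(1-\theta)}\|f\|_{F\dot B^{s_p}_{p,q}}.$$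
   Context: $\|f\|_{FL^p}=\|\hat f\|_{L^p}$; $\dot\Delta_j$ are homogeneous Littlewood–Paley blocks ($\dot\Delta_jf=\phi_j*f$, $\phi_j=2^{3j}\phi(2^j\cdot)$, $\hat\phi$ supported in $\{3/4\le|\xi|\le 8/3\}$, $\sum_j\hat\phi(2^{-j}\xi)=1$ for $\xi\ne0$). $F\dot B^s_{p,q}(\mathbb R^3)$ is the space of distributions modulo polynomials with $\|f\|_{F\dot B^s_{p,q}}=\|(2^{js}\|\dot\Delta_jf\|_{FL^p})_j\|_{\ell^q(\mathbb Z)}<\infty$. *)

theory Defs
  imports "HOL-Analysis.Analysis"
begin

text \<open>Everything is formulated on the Fourier side: a (tempered) vector field f on R^3,
  taken modulo polynomials, is represented by its Fourier transform F = hat f,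
  a measurable function R^3 -> C^3 (its value on the null set {0} is irrelevant,
  which is exactly the quotient by polynomials).  Phi stands for hat phi.\<close>

definition FLp_int :: "real \<Rightarrow> (real^3 \<Rightarrow> complex^3) \<Rightarrow> ennreal" where
  "FLp_int p G = (\<integral>\<^sup>+ \<xi>. ennreal (norm (G \<xi>) powr p) \<partial>lborel)"

definition FLp_mem :: "real \<Rightarrow> (real^3 \<Rightarrow> complex^3) \<Rightarrow> bool" where
  "FLp_mem p G \<longleftrightarrow> G \<in> borel_measurable lborel \<and> FLp_int p G < \<infinity>"

definition FLp_norm :: "real \<Rightarrow> (real^3 \<Rightarrow> complex^3) \<Rightarrow> real" where
  "FLp_norm p G = (enn2real (FLp_int p G)) powr (1 / p)"

definition LP_block :: "(real^3 \<Rightarrow> real) \<Rightarrow> int \<Rightarrow> (real^3 \<Rightarrow> complex^3) \<Rightarrow> (real^3 \<Rightarrow> complex^3)" where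
  "LP_block \<Phi> j F = (\<lambda>\<xi>. \<Phi> (2 powr (- real_of_int j) *\<^sub>R \<xi>) *\<^sub>R F \<xi>)"

definition lq_mem :: "ereal \<Rightarrow> (int \<Rightarrow> real) \<Rightarrow> bool" where
  "lq_mem q a \<longleftrightarrow> (if q = \<infinity> then bdd_above (range (\<lambda>j. \<bar>a j\<bar>))
                    else (\<lambda>j. \<bar>a j\<bar> powr real_of_ereal q) summable_on UNIV)"

definition lq_norm :: "ereal \<Rightarrow> (int \<Rightarrow> real) \<Rightarrow> real" where
  "lq_norm q a = (if q = \<infinity> then (SUP j. \<bar>a j\<bar>)
                  else (\<Sum>\<^sub>\<infinity>j. \<bar>a j\<bar> powr real_of_ereal q) powr (1 / real_of_ereal q))"

definition FB_seq :: "real \<Rightarrow> real \<Rightarrow> (real^3 \<Rightarrow> real) \<Rightarrow> (real^3 \<Rightarrow> complex^3) \<Rightarrow> int \<Rightarrow> real" where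
  "FB_seq s p \<Phi> F = (\<lambda>j. 2 powr (real_of_int j * s) * FLp_norm p (LP_block \<Phi> j F))"

definition FB_mem :: "real \<Rightarrow> real \<Rightarrow> ereal \<Rightarrow> (real^3 \<Rightarrow> real) \<Rightarrow> (real^3 \<Rightarrow> complex^3) \<Rightarrow> bool" where
  "FB_mem s p q \<Phi> F \<longleftrightarrow> F \<in> borel_measurable lborel \<and>
     (\<forall>j. FLp_mem p (LP_block \<Phi> j F)) \<and> lq_mem q (FB_seq s p \<Phi> F)"

definition FB_norm :: "real \<Rightarrow> real \<Rightarrow> ereal \<Rightarrow> (real^3 \<Rightarrow> real) \<Rightarrow> (real^3 \<Rightarrow> complex^3) \<Rightarrow> real" where
  "FB_norm s p q \<Phi> F = lq_norm q (FB_seq s p \<Phi> F)"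

definition div_free :: "(real^3 \<Rightarrow> complex^3) \<Rightarrow> bool" where
  "div_free F \<longleftrightarrow> (AE \<xi> in lborel. (\<Sum>k\<in>UNIV. complex_of_real (\<xi> $ k) * (F \<xi> $ k)) = 0)"

end

theory Submission
  imports Defs
begin


definition sh :: "real^3 \<Rightarrow> int" where "sh x = \<lfloor>log 2 (norm x)\<rfloor>"

lemma sh_bounds:
  assumes "x \<noteq> 0"
  shows "2 powr real_of_int (sh x) \<le> norm x" "norm x < 2 powr real_of_int (sh x + 1)"
  using floor_log_eq_powr_iff[of "norm x" 2 "sh x"] assms unfolding sh_def by auto

lemma supp_index:
  fixes \<Phi> :: "real^3 \<Rightarrow> real"
  assumes supp: "\<forall>\<xi>. \<Phi> \<xi> \<noteq> 0 \<longrightarrow> 3/4 \<le> norm \<xi> \<and> norm \<xi> \<le> 8/3"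
    and x: "x \<noteq> 0" and nz: "\<Phi> (2 powr (- real_of_int m) *\<^sub>R x) \<noteq> 0"
  shows "sh x - 1 \<le> m \<and> m \<le> sh x + 1"
proof -
  have n: "norm (2 powr (- real_of_int m) *\<^sub>R x) = 2 powr (- real_of_int m) * norm x" by simp
  from supp nz have b: "3/4 \<le> 2 powr (- real_of_int m) * norm x" "2 powr (- real_of_int m) * norm x \<le> 8/3"
    unfolding n by auto
  have p: "0 < 2 powr (- real_of_int m)" by simp
  have u: "2 powr (- real_of_int m) * norm x < 2 powr (real_of_int (sh x + 1 - m))"
  proof -
    have "2 powr (- real_of_int m) * norm x < 2 powr (- real_of_int m) * 2 powr real_of_int (sh x + 1)"
      using sh_bounds(2)[OF x] p by (intro mult_strict_left_mono) auto
    also have "\<dots> = 2 powr (real_of_int (sh x + 1 - m))" by (simp add: powr_add[symmetric])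
    finally show ?thesis .
  qed
  have l: "2 powr (real_of_int (sh x - m)) \<le> 2 powr (- real_of_int m) * norm x"
  proof -
    have "2 powr (real_of_int (sh x - m)) = 2 powr (- real_of_int m) * 2 powr real_of_int (sh x)"
      by (simp add: powr_add[symmetric])
    also have "\<dots> \<le> 2 powr (- real_of_int m) * norm x"
      using sh_bounds(1)[OF x] p by (intro mult_left_mono) auto
    finally show ?thesis .
  qed
  have 1: "m \<le> sh x + 1"
  proof (rule ccontr)
    assume "\<not> ?thesis"
    hence "real_of_int (sh x + 1 - m) \<le> -1" by simp
    hence "2 powr (real_of_int (sh x + 1 - m)) \<le> 2 powr (-1)" by (intro powr_mono) auto
    with u b show False by (simp add: powr_minus)
  qed
  have 2: "sh x - 1 \<le> m"
  proof (rule ccontr)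
    assume "\<not> ?thesis"
    hence "2 \<le> real_of_int (sh x - m)" by simp
    hence "2 powr 2 \<le> 2 powr (real_of_int (sh x - m))" by (intro powr_mono) auto
    with l b show False by simp
  qed
  from 1 2 show ?thesis by simp
qed

lemma partition3:
  fixes \<Phi> :: "real^3 \<Rightarrow> real"
  assumes supp: "\<forall>\<xi>. \<Phi> \<xi> \<noteq> 0 \<longrightarrow> 3/4 \<le> norm \<xi> \<and> norm \<xi> \<le> 8/3"
    and sum: "\<forall>\<xi>. \<xi> \<noteq> 0 \<longrightarrow> ((\<lambda>j::int. \<Phi> (2 powr (- real_of_int j) *\<^sub>R \<xi>)) has_sum 1) UNIV"
    and x: "x \<noteq> 0"
  shows "(\<Sum>m\<in>{sh x - 1..sh x + 1}. \<Phi> (2 powr (- real_of_int m) *\<^sub>R x)) = 1"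
proof -
  let ?f = "\<lambda>j::int. \<Phi> (2 powr (- real_of_int j) *\<^sub>R x)"
  have "(?f has_sum 1) UNIV" using sum x by auto
  hence "(?f has_sum 1) {sh x - 1..sh x + 1}"
    by (rule has_sum_cong_neutral[THEN iffD1, rotated -1])
       (use supp_index[OF supp x] in force)+
  moreover have "(?f has_sum (\<Sum>m\<in>{sh x - 1..sh x + 1}. ?f m)) {sh x - 1..sh x + 1}"
    by (rule has_sum_finite) simp
  ultimately show ?thesis using has_sum_unique by blast
qed


lemma lq_embed:
  fixes a :: "int \<Rightarrow> real" and q r N :: real
  assumes nn: "\<And>m. 0 \<le> a m" and sm: "(\<lambda>j. \<bar>a j\<bar> powr q) summable_on UNIV"
    and q: "1 \<le> q" and r: "q \<le> r"
    and N: "N = (\<Sum>\<^sub>\<infinity>j. \<bar>a j\<bar> powr q) powr (1/q)"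
  shows "\<And>m. a m \<le> N" "\<And>S. finite S \<Longrightarrow> (\<Sum>i\<in>S. a i powr r) \<le> N powr r"
proof -
  define T where "T = (\<Sum>\<^sub>\<infinity>j. \<bar>a j\<bar> powr q)"
  have fs: "(\<Sum>i\<in>S. a i powr q) \<le> T" if "finite S" for S
  proof -
    have "(\<Sum>i\<in>S. a i powr q) = (\<Sum>\<^sub>\<infinity>i\<in>S. \<bar>a i\<bar> powr q)" using nn that by simp
    also have "\<dots> \<le> T" unfolding T_def
      by (rule infsum_mono2) (use that sm in auto)
    finally show ?thesis .
  qed
  have T0: "0 \<le> T" using fs[of "{}"] by simp
  have NT: "N powr q = T" using N T0 q unfolding T_def[symmetric] by (simp add: powr_powr)
  show am: "a m \<le> N" for m
  proof -
    have "a m powr q \<le> T" using fs[of "{m}"] by simp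
    hence "(a m powr q) powr (1/q) \<le> T powr (1/q)" using nn q by (intro powr_mono2) auto
    thus ?thesis using N nn[of m] q unfolding T_def[symmetric] by (simp add: powr_powr)
  qed
  show "(\<Sum>i\<in>S. a i powr r) \<le> N powr r" if "finite S" for S
  proof -
    have "a i powr r \<le> a i powr q * N powr (r - q)" for i
    proof (cases "a i = 0")
      case False
      hence "a i powr r = a i powr q * a i powr (r - q)" using nn[of i] by (simp add: powr_add[symmetric])
      also have "\<dots> \<le> a i powr q * N powr (r - q)" using nn[of i] am[of i] r
        by (intro mult_left_mono powr_mono2) auto
      finally show ?thesis .
    qed simp
    hence "(\<Sum>i\<in>S. a i powr r) \<le> (\<Sum>i\<in>S. a i powr q) * N powr (r - q)"
      by (simp add: sum_distrib_right sum_mono)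
    also have "\<dots> \<le> T * N powr (r - q)" using fs[OF that] by (intro mult_right_mono) auto
    also have "\<dots> \<le> N powr r"
    proof (cases "N = 0")
      case True thus ?thesis using T0 NT q by auto
    next
      case False
      hence "0 < N" using am[of 0] nn[of 0] by linarith
      hence "N powr q * N powr (r - q) = N powr r" by (simp add: powr_add[symmetric])
      thus ?thesis using NT by simp
    qed
    finally show ?thesis .
  qed
qed

definition Amax :: "(int \<Rightarrow> real) \<Rightarrow> int \<Rightarrow> real" where
  "Amax a i = Max ((\<lambda>e. a (i + e)) ` {-3..3})"

lemma Amax_ge: "\<bar>m - i\<bar> \<le> 3 \<Longrightarrow> a m \<le> Amax a i"
  unfolding Amax_def by (rule Max_ge) (auto intro!: image_eqI[where x="m - i"])

lemma Amax_ex: "\<exists>e\<in>{-3..3}. Amax a i = a (i + e)"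
proof -
  have "Amax a i \<in> (\<lambda>e. a (i + e)) ` {-3..3}" unfolding Amax_def by (rule Max_in) auto
  thus ?thesis by auto
qed

lemma Amax_sum:
  fixes a :: "int \<Rightarrow> real"
  assumes nn: "\<And>m. 0 \<le> a m" and fs: "\<And>S. finite S \<Longrightarrow> (\<Sum>i\<in>S. a i powr r) \<le> B"
    and S: "finite S"
  shows "(\<Sum>i\<in>S. Amax a i powr r) \<le> 7 * B"
proof -
  have "Amax a i powr r \<le> (\<Sum>e\<in>{-3..3}. a (i + e) powr r)" for i
  proof -
    obtain e where e: "e \<in> {-3..3}" "Amax a i = a (i + e)" using Amax_ex by blast
    have "Amax a i powr r = a (i + e) powr r" using e by simp
    also have "\<dots> \<le> (\<Sum>e\<in>{-3..3}. a (i + e) powr r)"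
      by (rule member_le_sum) (use e in auto)
    finally show ?thesis .
  qed
  hence "(\<Sum>i\<in>S. Amax a i powr r) \<le> (\<Sum>i\<in>S. \<Sum>e\<in>{-3..3}. a (i + e) powr r)"
    by (rule sum_mono)
  also have "\<dots> = (\<Sum>e\<in>{-3..3::int}. \<Sum>i\<in>S. a (i + e) powr r)" by (rule sum.swap)
  also have "\<dots> \<le> (\<Sum>e\<in>{-3..3::int}. B)"
  proof (rule sum_mono)
    fix e :: int
    have "(\<Sum>i\<in>S. a (i + e) powr r) = (\<Sum>i\<in>(\<lambda>i. i + e) ` S. a i powr r)"
      by (subst sum.reindex) (auto simp: inj_on_def)
    also have "\<dots> \<le> B" using S by (intro fs) auto
    finally show "(\<Sum>i\<in>S. a (i + e) powr r) \<le> B" .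
  qed
  also have "\<dots> = 7 * B" by simp
  finally show ?thesis .
qed


lemma exps:
  fixes p \<theta> pt s r :: real
  assumes p: "1 < p" "p < 3/2" and th: "0 < \<theta>" "\<theta> < 1"
    and s: "2 - 3/p = (1 - \<theta>) * s"
    and pt_rel: "1/p = \<theta>/2 + (1 - \<theta>)/pt" and pt: "1 < pt" and r: "0 < r"
  shows "s * pt + (2*p-3)/(2-p) * (pt - p) = 2*p - 3"
    "2*(1-\<theta>)/(2-p) * (pt - p) = - \<theta> * pt"
    "(r-p)/(2-p) * (pt - p) + p = r * pt * ((1/r - \<theta>/2)/(1-\<theta>))"
    "pt < p"
proof -
  have d: "p \<noteq> 0" "p \<noteq> 2" "\<theta> \<noteq> 1" "pt \<noteq> 0" "r \<noteq> 0" using p th pt r by auto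
  have e: "2 * pt = \<theta> * p * pt + 2 * (1 - \<theta>) * p"
    using pt_rel p pt th by (simp add: field_simps)
  have s': "s = (2*p - 3) / (p * (1 - \<theta>))"
    using s p th by (simp add: field_simps)
  have k1: "pt*(2-p) + (pt-p)*p*(1-\<theta>) = p*(1-\<theta>)*(2-p)" using e by algebra
  have pos: "0 < p*(1-\<theta>)*(2-p)" using p th by simp
  have "p*(1-\<theta>)*(2-p) = \<theta>*(p*p) + p*2 - (p*p + \<theta>*(p*2))" by algebra
  hence nz: "\<theta>*(p*p) + p*2 \<noteq> p*p + \<theta>*(p*2)" using pos by linarith
  have k1': "pt/(p*(1-\<theta>)) + (pt-p)/(2-p) = 1" using k1 d nz by (simp add: field_simps)
  have "s * pt + (2*p-3)/(2-p) * (pt - p) = (2*p-3) * (pt/(p*(1-\<theta>)) + (pt-p)/(2-p))"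
    unfolding s' by (simp add: field_simps)
  thus "s * pt + (2*p-3)/(2-p) * (pt - p) = 2*p - 3" using k1' by simp
  have k2: "2*(1-\<theta>)*(pt-p) = -\<theta>*pt*(2-p)" using e by algebra
  thus "2*(1-\<theta>)/(2-p) * (pt - p) = - \<theta> * pt" using d by (simp add: field_simps)
  have k3: "2*(1-\<theta>)*(r-p)*(pt-p) + 2*p*(1-\<theta>)*(2-p) = pt*(2-r*\<theta>)*(2-p)" using e by algebra
  show "(r-p)/(2-p) * (pt - p) + p = r * pt * ((1/r - \<theta>/2)/(1-\<theta>))"
    using k3 d by (simp add: field_simps) algebra
  show "pt < p"
  proof -
    have "pt * (2 - \<theta>*p) = 2*(1-\<theta>)*p" using e by algebra
    moreover have "2*(1-\<theta>)*p < p * (2 - \<theta>*p)"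
    proof -
      have "\<theta>*p*p < \<theta>*p*2" using th p by simp
      thus ?thesis by (simp add: algebra_simps)
    qed
    ultimately have "pt * (2 - \<theta>*p) < p * (2 - \<theta>*p)" by simp
    moreover have "0 < 2 - \<theta>*p"
    proof -
      have "\<theta>*p < 1 * 2" using th p by (intro mult_strict_mono) auto
      thus ?thesis by simp
    qed
    ultimately show ?thesis by simp
  qed
qed


lemma norm_LP: "norm (LP_block \<Phi> m F x) = \<bar>\<Phi> (2 powr (- real_of_int m) *\<^sub>R x)\<bar> * norm (F x)"
  unfolding LP_block_def by simp

lemma pow3:
  fixes \<Phi> :: "real^3 \<Rightarrow> real"
  assumes supp: "\<forall>\<xi>. \<Phi> \<xi> \<noteq> 0 \<longrightarrow> 3/4 \<le> norm \<xi> \<and> norm \<xi> \<le> 8/3"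
    and sum: "\<forall>\<xi>. \<xi> \<noteq> 0 \<longrightarrow> ((\<lambda>j::int. \<Phi> (2 powr (- real_of_int j) *\<^sub>R \<xi>)) has_sum 1) UNIV"
    and x: "x \<noteq> 0" and g: "0 < \<gamma>"
  shows "norm (F x) powr \<gamma> \<le> 3 powr \<gamma> * (\<Sum>m\<in>{sh x - 1..sh x + 1}. norm (LP_block \<Phi> m F x) powr \<gamma>)"
proof -
  let ?S = "{sh x - 1..sh x + 1}"
  let ?f = "\<lambda>m. \<Phi> (2 powr (- real_of_int m) *\<^sub>R x)"
  have c: "card ?S = 3" by simp
  obtain m where m: "m \<in> ?S" "1/3 \<le> \<bar>?f m\<bar>"
  proof (rule ccontr)
    assume "\<not> thesis"
    hence lt: "\<And>m. m \<in> ?S \<Longrightarrow> \<bar>?f m\<bar> < 1/3" using that by force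
    have "1 = \<bar>\<Sum>m\<in>?S. ?f m\<bar>" using partition3[OF supp sum x] by simp
    also have "\<dots> \<le> (\<Sum>m\<in>?S. \<bar>?f m\<bar>)" by (rule sum_abs)
    also have "\<dots> < (\<Sum>m\<in>?S. 1/3)" by (rule sum_strict_mono) (use lt in auto)
    also have "\<dots> = 1" using c by simp
    finally show False by simp
  qed
  have "norm (F x) \<le> 3 * norm (LP_block \<Phi> m F x)"
    unfolding norm_LP using m(2) by (simp add: mult_le_cancel_right1 mult.assoc[symmetric])
  hence "norm (F x) powr \<gamma> \<le> (3 * norm (LP_block \<Phi> m F x)) powr \<gamma>"
    using g by (intro powr_mono2) auto
  also have "\<dots> = 3 powr \<gamma> * norm (LP_block \<Phi> m F x) powr \<gamma>" by (simp add: powr_mult)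
  also have "\<dots> \<le> 3 powr \<gamma> * (\<Sum>m\<in>?S. norm (LP_block \<Phi> m F x) powr \<gamma>)"
    by (intro mult_left_mono member_le_sum) (use m in auto)
  finally show ?thesis .
qed


lemma TH:
  fixes a b :: "int \<Rightarrow> real" and N \<mu> p r :: real
  assumes nn: "\<And>m. 0 \<le> a m" and aN: "\<And>m. a m \<le> N"
    and b: "\<And>m. b m = 2 powr (- real_of_int m * (2*p-3)) * a m powr p"
    and p: "1 < p" "p < 3/2" and r: "p \<le> r" and mu: "0 < \<mu>"
    and im: "\<bar>i - m\<bar> \<le> 1"
  shows "(if Amax a i > 0 then N * \<mu> * 2 powr ((2*p-3)/(2-p) * real_of_int i) * (Amax a i / N) powr ((r-p)/(2-p)) else 1) powr (2-p) * b m
     \<le> 2 * \<mu> powr (2-p) * N powr 2 * (Amax a i / N) powr r"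
proof (cases "a m = 0")
  case True
  thus ?thesis using b[of m] by simp
next
  case False
  let ?A = "Amax a i" and ?\<alpha> = "(2*p-3)/(2-p)" and ?\<beta> = "(r-p)/(2-p)"
  have am: "0 < a m" using False nn[of m] by linarith
  have Am: "a m \<le> ?A" using im by (intro Amax_ge) auto
  have A0: "0 < ?A" using am Am by linarith
  have AN: "?A \<le> N" using Amax_ex[of a i] aN by auto
  have N0: "0 < N" using A0 AN by linarith
  have x0: "0 < ?A / N" using A0 N0 by simp
  have bm: "b m \<le> 2 powr (- real_of_int m * (2*p-3)) * (N powr p * (?A / N) powr p)"
  proof -
    have "a m powr p \<le> ?A powr p" using am Am p by (intro powr_mono2) auto
    also have "?A powr p = (N * (?A / N)) powr p" using N0 by simp
    also have "\<dots> = N powr p * (?A / N) powr p" using N0 x0 powr_mult[of N "?A / N" p] by simp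
    finally show ?thesis unfolding b by simp
  qed
  have "(if ?A > 0 then N * \<mu> * 2 powr (?\<alpha> * real_of_int i) * (?A / N) powr ?\<beta> else 1) powr (2-p) * b m
      = (N * \<mu> * 2 powr (?\<alpha> * real_of_int i) * (?A / N) powr ?\<beta>) powr (2-p) * b m"
    using A0 by simp
  also have "\<dots> = N powr (2-p) * \<mu> powr (2-p) * 2 powr (?\<alpha> * real_of_int i * (2-p)) * (?A / N) powr (?\<beta> * (2-p)) * b m"
    using N0 mu x0 by (simp add: powr_mult powr_powr)
  also have "\<dots> \<le> N powr (2-p) * \<mu> powr (2-p) * 2 powr (?\<alpha> * real_of_int i * (2-p)) * (?A / N) powr (?\<beta> * (2-p))
      * (2 powr (- real_of_int m * (2*p-3)) * (N powr p * (?A / N) powr p))"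
    by (intro mult_left_mono bm) auto
  also have "\<dots> = \<mu> powr (2-p) * (N powr (2-p) * N powr p) * (2 powr (?\<alpha> * real_of_int i * (2-p)) * 2 powr (- real_of_int m * (2*p-3)))
      * ((?A / N) powr (?\<beta> * (2-p)) * (?A / N) powr p)" by (simp add: algebra_simps)
  also have "\<dots> = \<mu> powr (2-p) * N powr 2 * 2 powr ((real_of_int i - real_of_int m) * (2*p-3)) * (?A / N) powr r"
  proof -
    have "N powr (2-p) * N powr p = N powr 2" by (simp add: powr_add[symmetric])
    moreover have "2 powr (?\<alpha> * real_of_int i * (2-p)) * 2 powr (- real_of_int m * (2*p-3)) = 2 powr ((real_of_int i - real_of_int m) * (2*p-3))"
    proof -
      have "?\<alpha> * real_of_int i * (2-p) + (- real_of_int m * (2*p-3)) = (real_of_int i - real_of_int m) * (2*p-3)"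
        using p by (simp add: field_simps)
      thus ?thesis by (simp add: powr_add[symmetric])
    qed
    moreover have "(?A / N) powr (?\<beta> * (2-p)) * (?A / N) powr p = (?A / N) powr r"
      using p by (simp add: powr_add[symmetric])
    ultimately show ?thesis by simp
  qed
  also have "\<dots> \<le> \<mu> powr (2-p) * N powr 2 * 2 powr 1 * (?A / N) powr r"
  proof -
    have "(real_of_int i - real_of_int m) * (2*p-3) \<le> 1"
    proof -
      have "\<bar>real_of_int i - real_of_int m\<bar> \<le> 1" using im by linarith
      moreover have "\<bar>2*p-3\<bar> \<le> 1" using p by auto
      ultimately have "\<bar>(real_of_int i - real_of_int m) * (2*p-3)\<bar> \<le> 1 * 1"
        unfolding abs_mult by (intro mult_mono) auto
      thus ?thesis by linarith
    qed
    hence "2 powr ((real_of_int i - real_of_int m) * (2*p-3)) \<le> 2 powr 1" by (intro powr_mono) auto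
    thus ?thesis by (intro mult_right_mono mult_left_mono) auto
  qed
  finally show ?thesis by (simp add: algebra_simps)
qed


lemma alpha_bd:
  fixes p pt :: real
  assumes p: "1 < p" "p < 3/2" and pt: "1 < pt" "pt < p"
  shows "\<bar>(2*p-3)/(2-p) * (pt - p)\<bar> \<le> 1"
proof -
  have eq: "(2*p-3)/(2-p) * (pt - p) = (3-2*p)*(p-pt)/(2-p)" using p by (simp add: field_simps)
  have "(3-2*p)*(p-pt) \<le> (3-2*p)*(p-1)" using p pt by (intro mult_left_mono) auto
  also have "\<dots> \<le> 2 - p"
  proof -
    have "0 \<le> (p - 3/2)^2" by simp
    thus ?thesis by (simp add: power2_eq_square algebra_simps)
  qed
  finally have "(3-2*p)*(p-pt)/(2-p) \<le> 1" using p by simp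
  moreover have "0 \<le> (3-2*p)*(p-pt)/(2-p)" using p pt by simp
  ultimately show ?thesis unfolding eq by (metis abs_of_nonneg)
qed

lemma TG:
  fixes a b :: "int \<Rightarrow> real" and N p r pt s \<theta> eu \<beta> \<gamma> al :: real and j i k m :: int
  assumes nn: "\<And>m. 0 \<le> a m" and aN: "\<And>m. a m \<le> N"
    and b: "\<And>m. b m = 2 powr (- real_of_int m * (2*p-3)) * a m powr p"
    and p: "1 < p" "p < 3/2" and pt: "1 < pt" "pt < p"
    and beta: "0 \<le> \<beta>" and g: "0 \<le> \<gamma>" "\<beta> * (pt - p) + p = \<gamma>"
    and e1: "s * pt + al * (pt - p) = 2*p - 3" and albd: "\<bar>al * (pt - p)\<bar> \<le> 1"
    and e2: "eu * (pt - p) = - \<theta> * pt"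
    and ik: "\<bar>i - k\<bar> \<le> 1" and mk: "\<bar>m - k\<bar> \<le> 2"
  shows "2 powr (real_of_int k * s * pt) * (if Amax a i > 0 then N * 2 powr (real_of_int j * eu) * 2 powr (al * real_of_int i) * (Amax a i / N) powr \<beta> else 1) powr (pt-p) * b m
     \<le> 8 * 2 powr (- real_of_int j * \<theta> * pt) * N powr pt * (Amax a k / N) powr \<gamma>"
proof (cases "a m = 0")
  case True
  thus ?thesis using b[of m] by simp
next
  case False
  let ?Ai = "Amax a i" and ?Ak = "Amax a k" and ?\<alpha> = "al" and ?\<mu> = "2 powr (real_of_int j * eu)"
  have am: "0 < a m" using False nn[of m] by linarith
  have Ai: "a m \<le> ?Ai" using ik mk by (intro Amax_ge) auto
  have Ak: "a m \<le> ?Ak" using mk by (intro Amax_ge) auto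
  have A0: "0 < ?Ai" using am Ai by linarith
  have N0: "0 < N" using am aN[of m] by linarith
  define y where "y = a m / N"
  have y0: "0 < y" using am N0 unfolding y_def by simp
  have yi: "y \<le> ?Ai / N" using Ai N0 unfolding y_def by (simp add: divide_right_mono)
  have yk: "y \<le> ?Ak / N" using Ak N0 unfolding y_def by (simp add: divide_right_mono)
  have bm: "b m = 2 powr (- real_of_int m * (2*p-3)) * (N powr p * y powr p)"
  proof -
    have "a m = N * y" using N0 unfolding y_def by simp
    hence "a m powr p = N powr p * y powr p" using N0 y0 by (simp add: powr_mult)
    thus ?thesis unfolding b by simp
  qed
  have "(if ?Ai > 0 then N * ?\<mu> * 2 powr (?\<alpha> * real_of_int i) * (?Ai / N) powr \<beta> else 1) powr (pt-p)
      = N powr (pt-p) * ?\<mu> powr (pt-p) * 2 powr (?\<alpha> * real_of_int i * (pt-p)) * (?Ai / N) powr (\<beta> * (pt-p))"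
    using A0 N0 by (simp add: powr_mult powr_powr)
  also have "\<dots> \<le> N powr (pt-p) * ?\<mu> powr (pt-p) * 2 powr (?\<alpha> * real_of_int i * (pt-p)) * y powr (\<beta> * (pt-p))"
  proof -
    have "(?Ai / N) powr (\<beta> * (pt-p)) \<le> y powr (\<beta> * (pt-p))"
      using y0 yi beta pt by (intro powr_mono2') (auto simp: mult_nonneg_nonpos)
    thus ?thesis by (intro mult_left_mono) auto
  qed
  finally have lam: "(if ?Ai > 0 then N * ?\<mu> * 2 powr (?\<alpha> * real_of_int i) * (?Ai / N) powr \<beta> else 1) powr (pt-p)
      \<le> N powr (pt-p) * ?\<mu> powr (pt-p) * 2 powr (?\<alpha> * real_of_int i * (pt-p)) * y powr (\<beta> * (pt-p))" .
  define E where "E = real_of_int k * s * pt + ?\<alpha> * real_of_int i * (pt-p) + (- real_of_int m * (2*p-3))"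
  have E: "E \<le> 3"
  proof -
    have "E = (real_of_int k - real_of_int m) * (2*p-3) + (real_of_int i - real_of_int k) * (?\<alpha> * (pt - p))"
    proof -
      have sp: "s * pt = 2*p - 3 - ?\<alpha> * (pt - p)" using e1 by linarith
      have "real_of_int k * s * pt = real_of_int k * (2*p - 3 - ?\<alpha> * (pt - p))" by (simp add: mult.assoc sp[symmetric])
      thus ?thesis unfolding E_def by (simp add: algebra_simps)
    qed
    also have "\<dots> \<le> 2 * 1 + 1 * 1"
    proof -
      have "\<bar>(real_of_int k - real_of_int m) * (2*p-3)\<bar> \<le> 2 * 1"
        unfolding abs_mult using mk p by (intro mult_mono) auto
      moreover have "\<bar>(real_of_int i - real_of_int k) * (?\<alpha> * (pt - p))\<bar> \<le> 1 * 1"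
        unfolding abs_mult using ik albd by (intro mult_mono) auto
      ultimately show ?thesis by linarith
    qed
    finally show ?thesis by simp
  qed
  have "2 powr (real_of_int k * s * pt) * (if ?Ai > 0 then N * ?\<mu> * 2 powr (?\<alpha> * real_of_int i) * (?Ai / N) powr \<beta> else 1) powr (pt-p) * b m
     \<le> 2 powr (real_of_int k * s * pt) * (N powr (pt-p) * ?\<mu> powr (pt-p) * 2 powr (?\<alpha> * real_of_int i * (pt-p)) * y powr (\<beta> * (pt-p))) * b m"
    using lam b[of m] by (intro mult_right_mono mult_left_mono) auto
  also have "\<dots> = (N powr (pt-p) * N powr p) * ?\<mu> powr (pt-p) * (2 powr (real_of_int k * s * pt) * 2 powr (?\<alpha> * real_of_int i * (pt-p)) * 2 powr (- real_of_int m * (2*p-3)))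
      * (y powr (\<beta> * (pt-p)) * y powr p)"
    unfolding bm by (simp add: algebra_simps)
  also have "\<dots> = N powr pt * 2 powr (- real_of_int j * \<theta> * pt) * 2 powr E * y powr \<gamma>"
  proof -
    have "N powr (pt-p) * N powr p = N powr pt" by (simp add: powr_add[symmetric])
    moreover have "?\<mu> powr (pt-p) = 2 powr (- real_of_int j * \<theta> * pt)"
    proof -
      have "real_of_int j * eu * (pt - p) = - real_of_int j * \<theta> * pt"
        using e2 by (metis mult.assoc mult_minus_left mult_minus_right)
      thus ?thesis by (simp add: powr_powr)
    qed
    moreover have "2 powr (real_of_int k * s * pt) * 2 powr (?\<alpha> * real_of_int i * (pt-p)) * 2 powr (- real_of_int m * (2*p-3)) = 2 powr E"
      unfolding E_def by (simp add: powr_add[symmetric])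
    moreover have "y powr (\<beta> * (pt-p)) * y powr p = y powr \<gamma>" using g by (simp add: powr_add[symmetric])
    ultimately show ?thesis by simp
  qed
  also have "\<dots> \<le> N powr pt * 2 powr (- real_of_int j * \<theta> * pt) * 2 powr 3 * (?Ak / N) powr \<gamma>"
  proof -
    have "2 powr E \<le> 2 powr 3" using E by (intro powr_mono) auto
    moreover have "y powr \<gamma> \<le> (?Ak / N) powr \<gamma>" using y0 yk g by (intro powr_mono2) auto
    ultimately show ?thesis by (intro mult_mono) auto
  qed
  finally show ?thesis by (simp add: algebra_simps)
qed


definition Gc :: "(int \<Rightarrow> real) \<Rightarrow> (real^3 \<Rightarrow> complex^3) \<Rightarrow> real^3 \<Rightarrow> complex^3" where
  "Gc lam F x = (if x \<noteq> 0 \<and> lam (sh x) < norm (F x) then F x else 0)"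

definition Hc :: "(int \<Rightarrow> real) \<Rightarrow> (real^3 \<Rightarrow> complex^3) \<Rightarrow> real^3 \<Rightarrow> complex^3" where
  "Hc lam F x = (if x \<noteq> 0 \<and> norm (F x) \<le> lam (sh x) then F x else 0)"

lemma GH_sum: "x \<noteq> 0 \<Longrightarrow> F x = Gc lam F x + Hc lam F x"
  unfolding Gc_def Hc_def by auto

lemma PG:
  fixes \<Phi> :: "real^3 \<Rightarrow> real"
  assumes supp: "\<forall>\<xi>. \<Phi> \<xi> \<noteq> 0 \<longrightarrow> 3/4 \<le> norm \<xi> \<and> norm \<xi> \<le> 8/3"
    and sum: "\<forall>\<xi>. \<xi> \<noteq> 0 \<longrightarrow> ((\<lambda>j::int. \<Phi> (2 powr (- real_of_int j) *\<^sub>R \<xi>)) has_sum 1) UNIV"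
    and M: "\<And>x. \<bar>\<Phi> x\<bar> \<le> M" and lam: "\<And>i. 0 < lam i" and pt: "0 < pt" "pt \<le> p"
  shows "norm (LP_block \<Phi> k (Gc lam F) x) powr pt \<le>
    (\<Sum>m\<in>{k-2..k+2}. (M powr pt * 3 powr p * (\<Sum>i\<in>{k-1..k+1}. lam i powr (pt-p))) * norm (LP_block \<Phi> m F x) powr p)"
proof (cases "\<Phi> (2 powr (- real_of_int k) *\<^sub>R x) = 0 \<or> Gc lam F x = 0")
  case True
  hence "norm (LP_block \<Phi> k (Gc lam F) x) = 0" unfolding norm_LP by auto
  moreover have "0 \<le> (\<Sum>m\<in>{k-2..k+2}. (M powr pt * 3 powr p * (\<Sum>i\<in>{k-1..k+1}. lam i powr (pt-p))) * norm (LP_block \<Phi> m F x) powr p)"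
    by (intro sum_nonneg mult_nonneg_nonneg) auto
  ultimately show ?thesis by simp
next
  case False
  let ?i = "sh x" and ?X = "\<lambda>m. norm (LP_block \<Phi> m F x) powr p"
  have x: "x \<noteq> 0" and lt: "lam ?i < norm (F x)" and G: "Gc lam F x = F x"
    using False unfolding Gc_def by (auto split: if_splits)
  have ik: "?i - 1 \<le> k \<and> k \<le> ?i + 1" using supp_index[OF supp x] False by blast
  have Fpos: "0 < norm (F x)" using lt lam[of ?i] by linarith
  have M0: "0 \<le> M" using M[of 0] by linarith
  have "norm (LP_block \<Phi> k (Gc lam F) x) powr pt \<le> (M * norm (F x)) powr pt"
    unfolding norm_LP G using M pt by (intro powr_mono2 mult_right_mono) auto
  also have "\<dots> = M powr pt * (norm (F x) powr (pt - p) * norm (F x) powr p)"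
    using M0 Fpos by (simp add: powr_mult powr_add[symmetric])
  also have "\<dots> \<le> M powr pt * (lam ?i powr (pt - p) * (3 powr p * (\<Sum>m\<in>{?i - 1..?i + 1}. ?X m)))"
  proof -
    have "norm (F x) powr (pt - p) \<le> lam ?i powr (pt - p)"
      using lt lam[of ?i] pt by (intro powr_mono2') auto
    moreover have "norm (F x) powr p \<le> 3 powr p * (\<Sum>m\<in>{?i - 1..?i + 1}. ?X m)"
      using pow3[OF supp sum x, of p F] pt by simp
    ultimately show ?thesis by (intro mult_left_mono mult_mono) auto
  qed
  also have "\<dots> \<le> M powr pt * ((\<Sum>i\<in>{k-1..k+1}. lam i powr (pt-p)) * (3 powr p * (\<Sum>m\<in>{k-2..k+2}. ?X m)))"
  proof -
    have "lam ?i powr (pt - p) \<le> (\<Sum>i\<in>{k-1..k+1}. lam i powr (pt-p))"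
      by (rule member_le_sum) (use ik in auto)
    moreover have "(\<Sum>m\<in>{?i - 1..?i + 1}. ?X m) \<le> (\<Sum>m\<in>{k-2..k+2}. ?X m)"
      by (rule sum_mono2) (use ik in auto)
    ultimately show ?thesis
      by (intro mult_left_mono mult_mono) (auto intro!: sum_nonneg mult_nonneg_nonneg)
  qed
  also have "\<dots> = (\<Sum>m\<in>{k-2..k+2}. (M powr pt * 3 powr p * (\<Sum>i\<in>{k-1..k+1}. lam i powr (pt-p))) * ?X m)"
    by (simp add: sum_distrib_left algebra_simps)
  finally show ?thesis .
qed

lemma PH:
  fixes \<Phi> :: "real^3 \<Rightarrow> real" and n :: nat
  assumes supp: "\<forall>\<xi>. \<Phi> \<xi> \<noteq> 0 \<longrightarrow> 3/4 \<le> norm \<xi> \<and> norm \<xi> \<le> 8/3"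
    and sum: "\<forall>\<xi>. \<xi> \<noteq> 0 \<longrightarrow> ((\<lambda>j::int. \<Phi> (2 powr (- real_of_int j) *\<^sub>R \<xi>)) has_sum 1) UNIV"
    and lam: "\<And>i. 0 < lam i" and p: "0 < p" "p \<le> 2" and n: "\<bar>sh x\<bar> \<le> int n"
  shows "norm (Hc lam F x) powr 2 \<le>
    (\<Sum>m\<in>{- int n - 1..int n + 1}. (3 powr p * (\<Sum>i\<in>{m-1..m+1}. lam i powr (2-p))) * norm (LP_block \<Phi> m F x) powr p)"
proof (cases "Hc lam F x = 0")
  case True
  moreover have "0 \<le> (\<Sum>m\<in>{- int n - 1..int n + 1}. (3 powr p * (\<Sum>i\<in>{m-1..m+1}. lam i powr (2-p))) * norm (LP_block \<Phi> m F x) powr p)"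
    by (intro sum_nonneg mult_nonneg_nonneg) auto
  ultimately show ?thesis by simp
next
  case False
  let ?i = "sh x" and ?X = "\<lambda>m. norm (LP_block \<Phi> m F x) powr p"
  have x: "x \<noteq> 0" and le: "norm (F x) \<le> lam ?i" and H: "Hc lam F x = F x"
    using False unfolding Hc_def by (auto split: if_splits)
  have Fpos: "0 < norm (F x)" using False H by simp
  have "norm (Hc lam F x) powr 2 = norm (F x) powr (2 - p) * norm (F x) powr p"
    unfolding H using Fpos by (simp add: powr_add[symmetric])
  also have "\<dots> \<le> lam ?i powr (2 - p) * (3 powr p * (\<Sum>m\<in>{?i - 1..?i + 1}. ?X m))"
  proof -
    have "norm (F x) powr (2 - p) \<le> lam ?i powr (2 - p)"
      using le Fpos p by (intro powr_mono2) auto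
    moreover have "norm (F x) powr p \<le> 3 powr p * (\<Sum>m\<in>{?i - 1..?i + 1}. ?X m)"
      using pow3[OF supp sum x, of p F] p by simp
    ultimately show ?thesis by (intro mult_mono) auto
  qed
  also have "\<dots> = (\<Sum>m\<in>{?i - 1..?i + 1}. (3 powr p * lam ?i powr (2 - p)) * ?X m)"
    by (simp add: sum_distrib_left algebra_simps)
  also have "\<dots> \<le> (\<Sum>m\<in>{?i - 1..?i + 1}. (3 powr p * (\<Sum>i\<in>{m-1..m+1}. lam i powr (2-p))) * ?X m)"
  proof (rule sum_mono)
    fix m assume m: "m \<in> {?i - 1..?i + 1}"
    have "lam ?i powr (2 - p) \<le> (\<Sum>i\<in>{m-1..m+1}. lam i powr (2-p))"
      by (rule member_le_sum) (use m in auto)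
    thus "(3 powr p * lam ?i powr (2 - p)) * ?X m \<le> (3 powr p * (\<Sum>i\<in>{m-1..m+1}. lam i powr (2-p))) * ?X m"
      by (intro mult_right_mono mult_left_mono) auto
  qed
  also have "\<dots> \<le> (\<Sum>m\<in>{- int n - 1..int n + 1}. (3 powr p * (\<Sum>i\<in>{m-1..m+1}. lam i powr (2-p))) * ?X m)"
    by (rule sum_mono2) (use n in \<open>auto intro!: mult_nonneg_nonneg sum_nonneg\<close>)
  finally show ?thesis .
qed


lemma pred_nz[measurable]: "Measurable.pred borel (\<lambda>x::real^3. x \<noteq> 0)"
proof -
  have "{x::real^3. x \<noteq> 0} = - {0}" by auto
  hence "{x::real^3. x \<noteq> 0} \<in> sets borel" by (metis borel_open open_Compl closed_singleton)
  thus ?thesis unfolding pred_def by simp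
qed

lemma sh_meas[measurable]: "sh \<in> borel \<rightarrow>\<^sub>M count_space UNIV"
  unfolding sh_def by (rule measurable_compose[OF _ measurable_real_floor]) measurable

lemma pred_sh[measurable]: "Measurable.pred borel (\<lambda>x. P (sh x))"
  by (rule measurable_compose[OF sh_meas]) simp

lemma Gc_meas:
  assumes [measurable]: "F \<in> borel_measurable borel"
  shows "Gc lam F \<in> borel_measurable borel"
proof -
  have "(\<lambda>x. (\<lambda>i x. if x \<noteq> 0 \<and> lam i < norm (F x) then F x else (0::complex^3)) (sh x) x) \<in> borel_measurable borel"
    by (rule measurable_compose_countable[OF _ sh_meas]) measurable
  thus ?thesis unfolding Gc_def[abs_def] by simp
qed

lemma Hc_meas:
  assumes [measurable]: "F \<in> borel_measurable borel"
  shows "Hc lam F \<in> borel_measurable borel"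
proof -
  have "(\<lambda>x. (\<lambda>i x. if x \<noteq> 0 \<and> norm (F x) \<le> lam i then F x else (0::complex^3)) (sh x) x) \<in> borel_measurable borel"
    by (rule measurable_compose_countable[OF _ sh_meas]) measurable
  thus ?thesis unfolding Hc_def[abs_def] by simp
qed

lemma LP_meas:
  assumes [measurable]: "F \<in> borel_measurable borel" "\<Phi> \<in> borel_measurable borel"
  shows "LP_block \<Phi> m F \<in> borel_measurable borel"
proof -
  have [measurable]: "(\<lambda>x. \<Phi> (2 powr (- real_of_int m) *\<^sub>R x)) \<in> borel_measurable borel"
    by (rule measurable_compose[of _ _ borel]) auto
  show ?thesis unfolding LP_block_def by measurable
qed

lemma nn_int_lincomb:
  assumes S: "finite S" and c: "\<And>m. m \<in> S \<Longrightarrow> 0 \<le> c m"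
    and f: "\<And>m. m \<in> S \<Longrightarrow> f m \<in> borel_measurable M" and fnn: "\<And>m x. 0 \<le> f m x"
    and I: "\<And>m. m \<in> S \<Longrightarrow> (\<integral>\<^sup>+x. ennreal (f m x) \<partial>M) = ennreal (I m)" and Inn: "\<And>m. 0 \<le> I m"
  shows "(\<integral>\<^sup>+x. ennreal (\<Sum>m\<in>S. c m * f m x) \<partial>M) = ennreal (\<Sum>m\<in>S. c m * I m)"
proof -
  have "(\<integral>\<^sup>+x. ennreal (\<Sum>m\<in>S. c m * f m x) \<partial>M) = (\<integral>\<^sup>+x. (\<Sum>m\<in>S. ennreal (c m) * ennreal (f m x)) \<partial>M)"
    using c fnn by (intro nn_integral_cong) (simp add: ennreal_mult sum_nonneg flip: sum_ennreal)
  also have "\<dots> = (\<Sum>m\<in>S. \<integral>\<^sup>+x. ennreal (c m) * ennreal (f m x) \<partial>M)"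
    using f by (intro nn_integral_sum) auto
  also have "\<dots> = (\<Sum>m\<in>S. ennreal (c m) * ennreal (I m))"
    using f I by (intro sum.cong refl) (simp add: nn_integral_cmult)
  also have "\<dots> = ennreal (\<Sum>m\<in>S. c m * I m)"
    using c Inn by (simp add: ennreal_mult sum_nonneg flip: sum_ennreal)
  finally show ?thesis .
qed

lemma IG:
  fixes \<Phi> :: "real^3 \<Rightarrow> real"
  assumes supp: "\<forall>\<xi>. \<Phi> \<xi> \<noteq> 0 \<longrightarrow> 3/4 \<le> norm \<xi> \<and> norm \<xi> \<le> 8/3"
    and sum: "\<forall>\<xi>. \<xi> \<noteq> 0 \<longrightarrow> ((\<lambda>j::int. \<Phi> (2 powr (- real_of_int j) *\<^sub>R \<xi>)) has_sum 1) UNIV"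
    and M: "\<And>x. \<bar>\<Phi> x\<bar> \<le> M" and lam: "\<And>i. 0 < lam i" and pt: "0 < pt" "pt \<le> p"
    and Fm: "F \<in> borel_measurable borel" and Pm: "\<Phi> \<in> borel_measurable borel"
    and bF: "\<And>m. FLp_int p (LP_block \<Phi> m F) = ennreal (bR m)" and bnn: "\<And>m. 0 \<le> bR m"
  shows "FLp_int pt (LP_block \<Phi> k (Gc lam F)) \<le>
    ennreal (\<Sum>m\<in>{k-2..k+2}. (M powr pt * 3 powr p * (\<Sum>i\<in>{k-1..k+1}. lam i powr (pt-p))) * bR m)"
proof -
  have "FLp_int pt (LP_block \<Phi> k (Gc lam F)) \<le>
     (\<integral>\<^sup>+x. ennreal (\<Sum>m\<in>{k-2..k+2}. (M powr pt * 3 powr p * (\<Sum>i\<in>{k-1..k+1}. lam i powr (pt-p))) * norm (LP_block \<Phi> m F x) powr p) \<partial>lborel)"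
    unfolding FLp_int_def by (intro nn_integral_mono ennreal_leI PG[OF supp sum M lam pt])
  also have "\<dots> = ennreal (\<Sum>m\<in>{k-2..k+2}. (M powr pt * 3 powr p * (\<Sum>i\<in>{k-1..k+1}. lam i powr (pt-p))) * bR m)"
  proof (rule nn_int_lincomb)
    show "\<And>m. m \<in> {k-2..k+2} \<Longrightarrow> 0 \<le> M powr pt * 3 powr p * (\<Sum>i\<in>{k-1..k+1}. lam i powr (pt-p))"
      by (intro mult_nonneg_nonneg sum_nonneg) auto
    show "\<And>m. m \<in> {k-2..k+2} \<Longrightarrow> (\<lambda>x. norm (LP_block \<Phi> m F x) powr p) \<in> borel_measurable lborel"
      using LP_meas[OF Fm Pm] by simp
    show "\<And>m. m \<in> {k-2..k+2} \<Longrightarrow> (\<integral>\<^sup>+x. ennreal (norm (LP_block \<Phi> m F x) powr p) \<partial>lborel) = ennreal (bR m)"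
      using bF unfolding FLp_int_def by simp
  qed (use bnn in auto)
  finally show ?thesis .
qed

lemma IH:
  fixes \<Phi> :: "real^3 \<Rightarrow> real"
  assumes supp: "\<forall>\<xi>. \<Phi> \<xi> \<noteq> 0 \<longrightarrow> 3/4 \<le> norm \<xi> \<and> norm \<xi> \<le> 8/3"
    and sum: "\<forall>\<xi>. \<xi> \<noteq> 0 \<longrightarrow> ((\<lambda>j::int. \<Phi> (2 powr (- real_of_int j) *\<^sub>R \<xi>)) has_sum 1) UNIV"
    and lam: "\<And>i. 0 < lam i" and p: "0 < p" "p \<le> 2"
    and Fm: "F \<in> borel_measurable borel" and Pm: "\<Phi> \<in> borel_measurable borel"
    and bF: "\<And>m. FLp_int p (LP_block \<Phi> m F) = ennreal (bR m)" and bnn: "\<And>m. 0 \<le> bR m"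
    and B: "\<And>n::nat. (\<Sum>m\<in>{- int n - 1..int n + 1}. (3 powr p * (\<Sum>i\<in>{m-1..m+1}. lam i powr (2-p))) * bR m) \<le> B"
  shows "FLp_int 2 (Hc lam F) \<le> ennreal B"
proof -
  define f where "f n x = ennreal (if \<bar>sh x\<bar> \<le> int n then norm (Hc lam F x) powr 2 else 0)" for n :: nat and x
  have [measurable]: "Hc lam F \<in> borel_measurable borel" by (rule Hc_meas[OF Fm])
  have fm: "f n \<in> borel_measurable lborel" for n unfolding f_def by simp measurable
  have inc: "incseq f" unfolding incseq_def le_fun_def f_def by (auto intro!: ennreal_leI)
  have "FLp_int 2 (Hc lam F) \<le> (\<integral>\<^sup>+x. (SUP n. f n x) \<partial>lborel)"
    unfolding FLp_int_def
  proof (intro nn_integral_mono)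
    fix x
    have "ennreal (norm (Hc lam F x) powr 2) = f (nat \<bar>sh x\<bar>) x" unfolding f_def by simp
    also have "\<dots> \<le> (SUP n. f n x)" by (rule SUP_upper) auto
    finally show "ennreal (norm (Hc lam F x) powr 2) \<le> (SUP n. f n x)" .
  qed
  also have "\<dots> = (SUP n. \<integral>\<^sup>+x. f n x \<partial>lborel)"
    by (rule nn_integral_monotone_convergence_SUP[OF inc fm])
  also have "\<dots> \<le> ennreal B"
  proof (rule SUP_least)
    fix n
    have "(\<integral>\<^sup>+x. f n x \<partial>lborel) \<le> (\<integral>\<^sup>+x. ennreal (\<Sum>m\<in>{- int n - 1..int n + 1}. (3 powr p * (\<Sum>i\<in>{m-1..m+1}. lam i powr (2-p))) * norm (LP_block \<Phi> m F x) powr p) \<partial>lborel)"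
      unfolding f_def
    proof (intro nn_integral_mono ennreal_leI)
      fix x
      have nn: "0 \<le> (\<Sum>m\<in>{- int n - 1..int n + 1}. (3 powr p * (\<Sum>i\<in>{m-1..m+1}. lam i powr (2-p))) * norm (LP_block \<Phi> m F x) powr p)"
        by (intro sum_nonneg mult_nonneg_nonneg) auto
      show "(if \<bar>sh x\<bar> \<le> int n then norm (Hc lam F x) powr 2 else 0) \<le> (\<Sum>m\<in>{- int n - 1..int n + 1}. (3 powr p * (\<Sum>i\<in>{m-1..m+1}. lam i powr (2-p))) * norm (LP_block \<Phi> m F x) powr p)"
      proof (cases "\<bar>sh x\<bar> \<le> int n")
        case True
        thus ?thesis using PH[OF supp sum lam p True, where F=F] by simp
      qed (use nn in simp)
    qed
    also have "\<dots> = ennreal (\<Sum>m\<in>{- int n - 1..int n + 1}. (3 powr p * (\<Sum>i\<in>{m-1..m+1}. lam i powr (2-p))) * bR m)"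
    proof (rule nn_int_lincomb)
      show "\<And>m. m \<in> {- int n - 1..int n + 1} \<Longrightarrow> 0 \<le> 3 powr p * (\<Sum>i\<in>{m-1..m+1}. lam i powr (2-p))"
        by (intro mult_nonneg_nonneg sum_nonneg) auto
      show "\<And>m. m \<in> {- int n - 1..int n + 1} \<Longrightarrow> (\<lambda>x. norm (LP_block \<Phi> m F x) powr p) \<in> borel_measurable lborel"
        using LP_meas[OF Fm Pm] by simp
      show "\<And>m. m \<in> {- int n - 1..int n + 1} \<Longrightarrow> (\<integral>\<^sup>+x. ennreal (norm (LP_block \<Phi> m F x) powr p) \<partial>lborel) = ennreal (bR m)"
        using bF unfolding FLp_int_def by simp
    qed (use bnn in auto)
    also have "\<dots> \<le> ennreal B" by (intro ennreal_leI B)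
    finally show "(\<integral>\<^sup>+x. f n x \<partial>lborel) \<le> ennreal B" .
  qed
  finally show ?thesis .
qed


lemma lq_finish:
  fixes c A :: "int \<Rightarrow> real" and K r \<rho> :: real and qt :: ereal
  assumes cnn: "\<And>k. 0 \<le> c k" and cb: "\<And>k. c k \<le> K * A k powr (r * \<rho>)" and Ann: "\<And>k. 0 \<le> A k"
    and As: "\<And>S. finite S \<Longrightarrow> (\<Sum>k\<in>S. A k powr r) \<le> 7"
    and qt: "1 \<le> qt" and rel: "1 / qt = ereal \<rho>" and K: "0 \<le> K" and r: "0 < r"
  shows "lq_mem qt c \<and> lq_norm qt c \<le> 7 * K"
proof (cases qt)
  case PInf
  hence rho: "\<rho> = 0" using rel by simp
  have ck: "\<bar>c k\<bar> \<le> K" for k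
  proof -
    have "A k powr 0 \<le> 1" by (simp add: powr_def)
    hence "K * A k powr (r * \<rho>) \<le> K" unfolding rho using K by (simp add: mult_left_le)
    thus ?thesis using cb[of k] cnn[of k] by simp
  qed
  have bdd: "bdd_above (range (\<lambda>j. \<bar>c j\<bar>))" by (rule bdd_aboveI[where M=K]) (use ck in auto)
  have "(SUP j. \<bar>c j\<bar>) \<le> K" using ck by (intro cSUP_least) auto
  thus ?thesis unfolding lq_mem_def lq_norm_def using PInf bdd K by simp
next
  case (real Q)
  have Q: "1 \<le> Q" using qt real by simp
  have rho: "\<rho> = 1 / Q" using rel real Q by (simp add: one_ereal_def ereal_divide)
  have ck: "\<bar>c k\<bar> powr Q \<le> K powr Q * A k powr r" for k
  proof -
    have "\<bar>c k\<bar> powr Q \<le> (K * A k powr (r * \<rho>)) powr Q"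
      using cb[of k] cnn[of k] Q by (intro powr_mono2) auto
    also have "\<dots> = K powr Q * A k powr r"
      using K Ann[of k] Q unfolding rho by (simp add: powr_mult powr_powr)
    finally show ?thesis .
  qed
  have fs: "(\<Sum>k\<in>S. \<bar>c k\<bar> powr Q) \<le> 7 * K powr Q" if "finite S" for S
  proof -
    have "(\<Sum>k\<in>S. \<bar>c k\<bar> powr Q) \<le> (\<Sum>k\<in>S. K powr Q * A k powr r)" by (intro sum_mono ck)
    also have "\<dots> = K powr Q * (\<Sum>k\<in>S. A k powr r)" by (simp add: sum_distrib_left)
    also have "\<dots> \<le> K powr Q * 7" using As[OF that] by (intro mult_left_mono) auto
    finally show ?thesis by simp
  qed
  have sm: "(\<lambda>k. \<bar>c k\<bar> powr Q) summable_on UNIV"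
    by (rule nonneg_bdd_above_summable_on) (use fs in \<open>auto intro!: bdd_aboveI\<close>)
  have inf: "(\<Sum>\<^sub>\<infinity>k. \<bar>c k\<bar> powr Q) \<le> 7 * K powr Q"
    by (rule infsum_le_finite_sums[OF sm]) (use fs in auto)
  have "(\<Sum>\<^sub>\<infinity>k. \<bar>c k\<bar> powr Q) powr (1/Q) \<le> (7 * K powr Q) powr (1/Q)"
    using inf Q by (intro powr_mono2) (auto intro!: infsum_nonneg)
  also have "\<dots> = 7 powr (1/Q) * K" using K Q by (simp add: powr_mult powr_powr)
  also have "\<dots> \<le> 7 * K"
  proof -
    have "7 powr (1/Q) \<le> 7 powr 1" using Q by (intro powr_mono) auto
    thus ?thesis using K by (intro mult_right_mono) auto
  qed
  finally show ?thesis unfolding lq_mem_def lq_norm_def using real sm by simp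
next
  case MInf
  thus ?thesis using qt by simp
qed


lemma double_sum3:
  fixes g :: "int \<Rightarrow> real"
  assumes I: "finite I" and fs: "\<And>S. finite S \<Longrightarrow> (\<Sum>i\<in>S. g i) \<le> B"
  shows "(\<Sum>m\<in>I. \<Sum>i\<in>{m-1..m+1}. g i) \<le> 3 * B"
proof -
  have "(\<Sum>i\<in>{m-1..m+1}. g i) = (\<Sum>d\<in>{-1..1::int}. g (m + d))" for m
  proof -
    have e1: "{m-1..m+1} = {m-1, m, m+1}" and e2: "{-1..1::int} = {-1, 0, 1}" by auto
    show ?thesis unfolding e1 e2 by (simp add: algebra_simps)
  qed
  hence "(\<Sum>m\<in>I. \<Sum>i\<in>{m-1..m+1}. g i) = (\<Sum>d\<in>{-1..1::int}. \<Sum>m\<in>I. g (m + d))"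
    by (simp add: sum.swap[of _ I])
  also have "\<dots> \<le> (\<Sum>d\<in>{-1..1::int}. B)"
  proof (rule sum_mono)
    fix d :: int
    have "(\<Sum>m\<in>I. g (m + d)) = (\<Sum>m\<in>(\<lambda>m. m + d) ` I. g m)"
      by (subst sum.reindex) (auto simp: inj_on_def)
    also have "\<dots> \<le> B" using I by (intro fs) auto
    finally show "(\<Sum>m\<in>I. g (m + d)) \<le> B" .
  qed
  also have "\<dots> = 3 * B" by simp
  finally show ?thesis .
qed

lemma Phi_bound:
  fixes \<Phi> :: "real^3 \<Rightarrow> real"
  assumes cont: "continuous_on UNIV \<Phi>" and supp: "\<forall>\<xi>. \<Phi> \<xi> \<noteq> 0 \<longrightarrow> 3/4 \<le> norm \<xi> \<and> norm \<xi> \<le> 8/3"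
  shows "\<exists>M. \<forall>x. \<bar>\<Phi> x\<bar> \<le> M"
proof -
  have "compact (\<Phi> ` cball 0 (8/3))"
    by (rule compact_continuous_image) (use cont continuous_on_subset in auto)
  then obtain M where M: "\<And>y. y \<in> \<Phi> ` cball 0 (8/3) \<Longrightarrow> norm y \<le> M"
    using compact_imp_bounded bounded_iff by metis
  have "\<bar>\<Phi> x\<bar> \<le> max M 0" for x
  proof (cases "\<Phi> x = 0")
    case False
    hence "x \<in> cball 0 (8/3)" using supp by auto
    thus ?thesis using M[of "\<Phi> x"] by auto
  qed simp
  thus ?thesis by blast
qed

lemma Asum_div:
  fixes A :: "int \<Rightarrow> real"
  assumes Ann: "\<And>i. 0 \<le> A i" and fs: "\<And>S. finite S \<Longrightarrow> (\<Sum>i\<in>S. A i powr r) \<le> 7 * N powr r"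
    and N: "0 \<le> N" and S: "finite S"
  shows "(\<Sum>i\<in>S. (A i / N) powr r) \<le> 7"
proof (cases "N = 0")
  case True thus ?thesis by simp
next
  case False
  hence N0: "0 < N" using N by simp
  have "(\<Sum>i\<in>S. (A i / N) powr r) = (\<Sum>i\<in>S. A i powr r) / N powr r"
    using Ann N0 by (simp add: powr_divide sum_divide_distrib)
  also have "\<dots> \<le> 7 * N powr r / N powr r" using fs[OF S] N0 by (intro divide_right_mono) auto
  also have "\<dots> = 7" using N0 by simp
  finally show ?thesis .
qed


theorem lemma2p6:
  fixes p q \<theta> s pt :: real and qt :: ereal and \<Phi> :: "real^3 \<Rightarrow> real"
  assumes Phi_cont: "continuous_on UNIV \<Phi>"
    and Phi_supp: "\<forall>\<xi>. \<Phi> \<xi> \<noteq> 0 \<longrightarrow> 3/4 \<le> norm \<xi> \<and> norm \<xi> \<le> 8/3"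
    and Phi_sum: "\<forall>\<xi>. \<xi> \<noteq> 0 \<longrightarrow> ((\<lambda>j::int. \<Phi> (2 powr (- real_of_int j) *\<^sub>R \<xi>)) has_sum 1) UNIV"
    and p: "1 < p" "p < 3/2"
    and q: "1 \<le> q"
    and \<theta>: "0 < \<theta>" "\<theta> < 1"
    and s: "2 - 3/p = (1 - \<theta>) * s"
    and pt_rel: "1/p = \<theta>/2 + (1 - \<theta>)/pt"
    and pt: "1 < pt" "pt < 3/2"
    and qt: "1 \<le> qt"
    and qt_rel: "1 / qt = (if q > p then ereal (1/(1 - \<theta>) * (1/q - \<theta>/2)) else ereal (1/pt))"
  shows "\<exists>C::real. \<forall>F j::int. FB_mem (2 - 3/p) p (ereal q) \<Phi> F \<and> div_free F \<longrightarrow>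
           (\<exists>G H. FB_mem s pt qt \<Phi> G \<and> div_free G \<and> FLp_mem 2 H \<and> div_free H \<and>
                  (AE \<xi> in lborel. F \<xi> = G \<xi> + H \<xi>) \<and>
                  FB_norm s pt qt \<Phi> G \<le> C * 2 powr (- real_of_int j * \<theta>) * FB_norm (2 - 3/p) p (ereal q) \<Phi> F \<and>
                  FLp_norm 2 H \<le> C * 2 powr (real_of_int j * (1 - \<theta>)) * FB_norm (2 - 3/p) p (ereal q) \<Phi> F)"
proof -
  have Pm: "\<Phi> \<in> borel_measurable borel" by (rule borel_measurable_continuous_onI[OF Phi_cont])
  obtain M0 where M0: "\<And>x. \<bar>\<Phi> x\<bar> \<le> M0" using Phi_bound[OF Phi_cont Phi_supp] by blast
  define M where "M = max M0 0"
  have M: "\<And>x. \<bar>\<Phi> x\<bar> \<le> M" and Mnn: "0 \<le> M" using M0 unfolding M_def by (auto intro: max.coboundedI1)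
  define r where "r = max p q"
  define \<rho> where "\<rho> = (1/r - \<theta>/2)/(1-\<theta>)"
  have r: "p \<le> r" "q \<le> r" "0 < r" using p unfolding r_def by auto
  have ptp: "pt < p" using exps(4)[OF p \<theta> s pt_rel pt(1) r(3)] .
  have rel: "1 / qt = ereal \<rho>"
  proof (cases "q > p")
    case True
    thus ?thesis using qt_rel unfolding \<rho>_def r_def by (simp add: field_simps)
  next
    case False
    have "1/p - \<theta>/2 = (1-\<theta>)/pt" using pt_rel by simp
    hence "1/pt = (1/p - \<theta>/2)/(1-\<theta>)" using \<theta> by simp
    thus ?thesis using qt_rel False unfolding \<rho>_def r_def by simp
  qed
  have rho0: "0 \<le> \<rho>"
  proof -
    have "0 \<le> 1 / qt" using qt by (cases qt) auto
    thus ?thesis using rel by simp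
  qed
  define W where "W = (120 * M powr pt * 3 powr p) powr (1/pt)"
  define KH where "KH = (42 * 3 powr p) powr (1/2)"
  have W0: "0 \<le> W" unfolding W_def by simp
  show ?thesis
  proof (rule exI[of _ "max (7 * W) KH"], intro allI impI)
    fix F and j :: int
    assume FF: "FB_mem (2 - 3/p) p (ereal q) \<Phi> F \<and> div_free F"
    show "\<exists>G H. FB_mem s pt qt \<Phi> G \<and> div_free G \<and> FLp_mem 2 H \<and> div_free H \<and>
                  (AE \<xi> in lborel. F \<xi> = G \<xi> + H \<xi>) \<and>
                  FB_norm s pt qt \<Phi> G \<le> max (7 * W) KH * 2 powr (- real_of_int j * \<theta>) * FB_norm (2 - 3/p) p (ereal q) \<Phi> F \<and>
                  FLp_norm 2 H \<le> max (7 * W) KH * 2 powr (real_of_int j * (1 - \<theta>)) * FB_norm (2 - 3/p) p (ereal q) \<Phi> F"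
    proof -
    have FB: "FB_mem (2 - 3/p) p (ereal q) \<Phi> F" and df: "div_free F" using FF by auto
    have Fm: "F \<in> borel_measurable borel" using FB unfolding FB_mem_def by simp
    have fin: "FLp_int p (LP_block \<Phi> m F) < \<infinity>" for m using FB unfolding FB_mem_def FLp_mem_def by auto
    define bR where "bR m = enn2real (FLp_int p (LP_block \<Phi> m F))" for m
    have bF: "FLp_int p (LP_block \<Phi> m F) = ennreal (bR m)" for m
      using fin[of m] unfolding bR_def by (simp add: ennreal_enn2real)
    have bnn: "0 \<le> bR m" for m unfolding bR_def by simp
    define a where "a = FB_seq (2 - 3/p) p \<Phi> F"
    have a_eq: "a m = 2 powr (real_of_int m * (2 - 3/p)) * bR m powr (1/p)" for m
      unfolding a_def FB_seq_def FLp_norm_def bR_def by simp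
    have ann: "0 \<le> a m" for m using a_eq by simp
    have brel: "bR m = 2 powr (- real_of_int m * (2*p-3)) * a m powr p" for m
    proof -
      have "a m powr p = 2 powr (real_of_int m * (2 - 3/p) * p) * bR m"
        unfolding a_eq using bnn[of m] p by (simp add: powr_mult powr_powr)
      moreover have "real_of_int m * (2 - 3/p) * p = real_of_int m * (2*p-3)" using p by (simp add: field_simps)
      ultimately have "a m powr p = 2 powr (real_of_int m * (2*p-3)) * bR m" by simp
      hence "2 powr (- real_of_int m * (2*p-3)) * a m powr p = (2 powr (- real_of_int m * (2*p-3)) * 2 powr (real_of_int m * (2*p-3))) * bR m"
        by simp
      also have "\<dots> = bR m" by (simp add: powr_add[symmetric])
      finally show ?thesis by simp
    qed
    define N where "N = FB_norm (2 - 3/p) p (ereal q) \<Phi> F"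
    have sm: "(\<lambda>j. \<bar>a j\<bar> powr q) summable_on UNIV" using FB unfolding FB_mem_def lq_mem_def a_def by simp
    have Ndef: "N = (\<Sum>\<^sub>\<infinity>j. \<bar>a j\<bar> powr q) powr (1/q)" unfolding N_def FB_norm_def lq_norm_def a_def by simp
    have aN: "\<And>m. a m \<le> N" and ar: "\<And>S. finite S \<Longrightarrow> (\<Sum>i\<in>S. a i powr r) \<le> N powr r"
      using lq_embed[OF ann sm q r(2) Ndef] by auto
    have N0: "0 \<le> N" using aN[of 0] ann[of 0] by linarith
    have Ann: "0 \<le> Amax a i" for i using ann[of i] Amax_ge[of i i a] by simp
    have AN: "Amax a i \<le> N" for i using Amax_ex[of a i] aN by auto
    have AS: "(\<Sum>i\<in>S. (Amax a i / N) powr r) \<le> 7" if S: "finite S" for S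
      by (rule Asum_div[OF Ann _ N0 S]) (rule Amax_sum[OF ann ar])
    define eu where "eu = 2*(1-\<theta>)/(2-p)"
    define lam where "lam i = (if Amax a i > 0 then N * 2 powr (real_of_int j * eu) * 2 powr ((2*p-3)/(2-p) * real_of_int i) * (Amax a i / N) powr ((r-p)/(2-p)) else 1)" for i
    have lam0: "0 < lam i" for i
    proof (cases "Amax a i > 0")
      case True
      hence "0 < N" using AN[of i] by linarith
      thus ?thesis unfolding lam_def using True by simp
    qed (simp add: lam_def)
    define G where "G = Gc lam F"
    define H where "H = Hc lam F"
    have Gm: "G \<in> borel_measurable borel" unfolding G_def by (rule Gc_meas[OF Fm])
    have Hm: "H \<in> borel_measurable borel" unfolding H_def by (rule Hc_meas[OF Fm])
    define mu2 where "mu2 = (2 powr (real_of_int j * eu)) powr (2-p)"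
    have THi: "lam i powr (2-p) * bR m \<le> 2 * mu2 * N powr 2 * (Amax a i / N) powr r" if "\<bar>i - m\<bar> \<le> 1" for i m
      using TH[OF ann aN brel p r(1) _ that, of "2 powr (real_of_int j * eu)"] unfolding lam_def mu2_def by simp
    define B where "B = 42 * 3 powr p * mu2 * N powr 2"
    have Bn: "(\<Sum>m\<in>{- int n - 1..int n + 1}. (3 powr p * (\<Sum>i\<in>{m-1..m+1}. lam i powr (2-p))) * bR m) \<le> B" for n :: nat
    proof -
      let ?I = "{- int n - 1..int n + 1}"
      have "(\<Sum>m\<in>?I. (3 powr p * (\<Sum>i\<in>{m-1..m+1}. lam i powr (2-p))) * bR m)
          = (\<Sum>m\<in>?I. \<Sum>i\<in>{m-1..m+1}. 3 powr p * (lam i powr (2-p) * bR m))"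
        by (simp add: sum_distrib_left sum_distrib_right algebra_simps)
      also have "\<dots> \<le> (\<Sum>m\<in>?I. \<Sum>i\<in>{m-1..m+1}. 3 powr p * (2 * mu2 * N powr 2 * (Amax a i / N) powr r))"
        by (intro sum_mono mult_left_mono THi) auto
      also have "\<dots> = (3 powr p * 2 * mu2 * N powr 2) * (\<Sum>m\<in>?I. \<Sum>i\<in>{m-1..m+1}. (Amax a i / N) powr r)"
        by (simp add: sum_distrib_left algebra_simps)
      also have "\<dots> \<le> (3 powr p * 2 * mu2 * N powr 2) * (3 * 7)"
        by (intro mult_left_mono double_sum3 AS) (auto simp: mu2_def)
      also have "\<dots> = B" unfolding B_def by simp
      finally show ?thesis .
    qed
    have IHb: "FLp_int 2 H \<le> ennreal B"
      unfolding H_def using p by (intro IH[OF Phi_supp Phi_sum lam0 _ _ Fm Pm bF bnn Bn]) auto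
    have B0: "0 \<le> B" unfolding B_def mu2_def by simp
    have Hmem: "FLp_mem 2 H" unfolding FLp_mem_def using Hm IHb by (auto simp: top_unique intro: le_less_trans)
    have Hnorm: "FLp_norm 2 H \<le> KH * 2 powr (real_of_int j * (1 - \<theta>)) * N"
    proof -
      have "FLp_norm 2 H \<le> B powr (1/2)" unfolding FLp_norm_def
        using IHb B0 by (intro powr_mono2 enn2real_leI) auto
      also have "B powr (1/2) = KH * 2 powr (real_of_int j * (1 - \<theta>)) * N"
      proof -
        have e: "real_of_int j * eu * (2 - p) = 2 * (real_of_int j * (1 - \<theta>))"
          unfolding eu_def using p by (simp add: field_simps)
        have "B powr (1/2) = (42 * 3 powr p) powr (1/2) * mu2 powr (1/2) * (N powr 2) powr (1/2)"
          unfolding B_def mu2_def using N0 by (simp add: powr_mult)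
        also have "mu2 powr (1/2) = 2 powr (real_of_int j * (1 - \<theta>))"
        proof -
          have e': "real_of_int j * eu * (2 - p) * (1/2) = real_of_int j * (1 - \<theta>)" using e by (simp add: algebra_simps)
          show ?thesis unfolding mu2_def powr_powr e' ..
        qed
        also have "(N powr 2) powr (1/2) = N" using N0 by (simp add: powr_powr)
        finally show ?thesis unfolding KH_def by simp
      qed
      finally show ?thesis .
    qed
    have e1: "s * pt + (2*p-3)/(2-p) * (pt - p) = 2*p - 3" by (rule exps(1)[OF p \<theta> s pt_rel pt(1) r(3)])
    have e2: "eu * (pt - p) = - \<theta> * pt" unfolding eu_def by (rule exps(2)[OF p \<theta> s pt_rel pt(1) r(3)])
    have e3: "(r-p)/(2-p) * (pt - p) + p = r * pt * \<rho>" unfolding \<rho>_def by (rule exps(3)[OF p \<theta> s pt_rel pt(1) r(3)])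
    have albd: "\<bar>(2*p-3)/(2-p) * (pt - p)\<bar> \<le> 1" by (rule alpha_bd[OF p pt(1) ptp])
    have beta: "0 \<le> (r-p)/(2-p)" using r p by simp
    have g0: "0 \<le> r * pt * \<rho>" using r pt rho0 by simp
    have TGi: "2 powr (real_of_int k * s * pt) * lam i powr (pt-p) * bR m
        \<le> 8 * 2 powr (- real_of_int j * \<theta> * pt) * N powr pt * (Amax a k / N) powr (r * pt * \<rho>)"
      if "\<bar>i - k\<bar> \<le> 1" "\<bar>m - k\<bar> \<le> 2" for i k m
      using TG[OF ann aN brel p pt(1) ptp beta g0 e3 e1 albd e2 that] unfolding lam_def by simp
    define Y where "Y k = (\<Sum>m\<in>{k-2..k+2}. (M powr pt * 3 powr p * (\<Sum>i\<in>{k-1..k+1}. lam i powr (pt-p))) * bR m)" for k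
    have IGk: "FLp_int pt (LP_block \<Phi> k G) \<le> ennreal (Y k)" for k
      unfolding G_def Y_def using pt ptp by (intro IG[OF Phi_supp Phi_sum M lam0 _ _ Fm Pm bF bnn]) auto
    have Y0: "0 \<le> Y k" for k unfolding Y_def using Mnn bnn by (intro sum_nonneg mult_nonneg_nonneg) auto
    have Yb: "2 powr (real_of_int k * s * pt) * Y k \<le> 120 * M powr pt * 3 powr p * (2 powr (- real_of_int j * \<theta> * pt) * N powr pt * (Amax a k / N) powr (r * pt * \<rho>))" for k
    proof -
      let ?Z = "2 powr (- real_of_int j * \<theta> * pt) * N powr pt * (Amax a k / N) powr (r * pt * \<rho>)"
      have "2 powr (real_of_int k * s * pt) * Y k = (\<Sum>m\<in>{k-2..k+2}. \<Sum>i\<in>{k-1..k+1}. M powr pt * 3 powr p * (2 powr (real_of_int k * s * pt) * lam i powr (pt-p) * bR m))"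
        unfolding Y_def by (simp add: sum_distrib_left sum_distrib_right algebra_simps)
      also have "\<dots> \<le> (\<Sum>m\<in>{k-2..k+2}. \<Sum>i\<in>{k-1..k+1}. M powr pt * 3 powr p * (8 * ?Z))"
      proof (intro sum_mono mult_left_mono)
        fix m i assume "m \<in> {k-2..k+2}" "i \<in> {k-1..k+1}"
        hence "\<bar>i - k\<bar> \<le> 1" "\<bar>m - k\<bar> \<le> 2" by auto
        from TGi[OF this] show "2 powr (real_of_int k * s * pt) * lam i powr (pt-p) * bR m \<le> 8 * ?Z"
          by (simp add: mult.assoc)
      qed (use Mnn in auto)
      also have "\<dots> = 120 * M powr pt * 3 powr p * ?Z" by simp
      finally show ?thesis by simp
    qed
    define K where "K = W * 2 powr (- real_of_int j * \<theta>) * N"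
    have K0: "0 \<le> K" unfolding K_def using W0 N0 by simp
    have seqb: "FB_seq s pt \<Phi> G k \<le> K * (Amax a k / N) powr (r * \<rho>)" for k
    proof -
      have "FB_seq s pt \<Phi> G k = 2 powr (real_of_int k * s) * enn2real (FLp_int pt (LP_block \<Phi> k G)) powr (1/pt)"
        unfolding FB_seq_def FLp_norm_def by simp
      also have "\<dots> \<le> 2 powr (real_of_int k * s) * Y k powr (1/pt)"
        using IGk[of k] Y0[of k] pt by (intro mult_left_mono powr_mono2 enn2real_leI) auto
      also have "\<dots> = (2 powr (real_of_int k * s * pt) * Y k) powr (1/pt)"
        using Y0[of k] pt by (simp add: powr_mult powr_powr)
      also have "\<dots> \<le> (120 * M powr pt * 3 powr p * (2 powr (- real_of_int j * \<theta> * pt) * N powr pt * (Amax a k / N) powr (r * pt * \<rho>))) powr (1/pt)"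
        using Yb[of k] Y0[of k] pt by (intro powr_mono2) auto
      also have "\<dots> = K * (Amax a k / N) powr (r * \<rho>)"
        unfolding K_def W_def using pt N0 Ann[of k] Mnn by (simp add: powr_mult powr_powr)
      finally show ?thesis .
    qed
    have seq0: "0 \<le> FB_seq s pt \<Phi> G k" for k unfolding FB_seq_def FLp_norm_def by simp
    have lqG: "lq_mem qt (FB_seq s pt \<Phi> G) \<and> lq_norm qt (FB_seq s pt \<Phi> G) \<le> 7 * K"
      by (rule lq_finish[OF seq0 seqb _ AS qt rel K0 r(3)]) (use Ann N0 in auto)
    have finG: "FLp_int pt (LP_block \<Phi> k G) < top" for k
      using IGk[of k] ennreal_less_top le_less_trans by blast
    have GFB: "FB_mem s pt qt \<Phi> G"
      unfolding FB_mem_def FLp_mem_def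
      using Gm LP_meas[OF Gm Pm] finG lqG by auto
    have Gnorm: "FB_norm s pt qt \<Phi> G \<le> 7 * K" using lqG unfolding FB_norm_def by simp
    have dG: "div_free G" using df unfolding div_free_def G_def Gc_def
      by (rule eventually_mono) auto
    have dH: "div_free H" using df unfolding div_free_def H_def Hc_def
      by (rule eventually_mono) auto
    have ae: "AE \<xi> in lborel. F \<xi> = G \<xi> + H \<xi>"
      using AE_lborel_singleton[of 0] by (rule eventually_mono) (auto simp: G_def H_def GH_sum)
    have C1: "7 * K \<le> max (7 * W) KH * 2 powr (- real_of_int j * \<theta>) * N"
    proof -
      have "7 * K = (7 * W) * 2 powr (- real_of_int j * \<theta>) * N" unfolding K_def by simp
      also have "\<dots> \<le> max (7 * W) KH * 2 powr (- real_of_int j * \<theta>) * N"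
        using N0 by (intro mult_right_mono) auto
      finally show ?thesis .
    qed
    have C2: "KH * 2 powr (real_of_int j * (1 - \<theta>)) * N \<le> max (7 * W) KH * 2 powr (real_of_int j * (1 - \<theta>)) * N"
      using N0 by (intro mult_right_mono) auto
    have n1: "FB_norm s pt qt \<Phi> G \<le> max (7 * W) KH * 2 powr (- real_of_int j * \<theta>) * N"
      using Gnorm C1 by linarith
    have n2: "FLp_norm 2 H \<le> max (7 * W) KH * 2 powr (real_of_int j * (1 - \<theta>)) * N"
      using Hnorm C2 by linarith
    show ?thesis
      using GFB dG Hmem dH ae n1 n2 unfolding N_def by blast
    qed
  qed
qed


end
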